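(* Let $x_1,x_2,x_3>0$, $\gamma,\delta>0$ with $\gamma\ne1\ne\delta$, and let $$\mathbf{Q}=\begin{pmatrix}1&\delta x_1&x_2&x_3\\ 1/(\delta x_1)&1&x_2/x_1&x_3/x_1\\ 1/x_2&x_1/x_2&1&\gamma x_3/x_2\\ 1/x_3&x_1/x_3&x_2/(\gamma x_3)&1\end{pmatrix}$$ with principal right eigenvector $\mathbf{w}^{EM}$. If $\delta,\gamma<1$, then $w_2^{EM}/w_3^{EM}>x_2/x_1$.
   Context: The principal right eigenvector is the positive (Perron) eigenvector belonging to the largest eigenvalue. *)

theory Defs
  imports Complex_Main
begin

text \<open>Matrices of fixed size n are represented as functions nat => nat => real,
  indexed by 1..n (as in the paper); vectors as functions nat => real on 1..n.\<close>

definition Qmat :: "real \<Rightarrow> real \<Rightarrow> real \<Rightarrow> real \<Rightarrow> real \<Rightarrow> nat \<Rightarrow> nat \<Rightarrow> real" where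
  "Qmat x1 x2 x3 \<gamma> \<delta> i j =
     [[1,              \<delta> * x1,       x2,                x3],
      [1 / (\<delta> * x1),   1,            x2 / x1,           x3 / x1],
      [1 / x2,         x1 / x2,      1,                 \<gamma> * x3 / x2],
      [1 / x3,         x1 / x3,      x2 / (\<gamma> * x3),   1]] ! (i - 1) ! (j - 1)"

definition principal_right_eigenvector :: "(nat \<Rightarrow> nat \<Rightarrow> real) \<Rightarrow> nat \<Rightarrow> (nat \<Rightarrow> real) \<Rightarrow> bool" where
  "principal_right_eigenvector A n w \<longleftrightarrow>
     (\<forall>i\<in>{1..n}. w i > 0) \<and>
     (\<exists>r::real.
        (\<forall>i\<in>{1..n}. (\<Sum>j=1..n. A i j * w j) = r * w i) \<and>
        (\<forall>(\<mu>::complex) (v::nat \<Rightarrow> complex).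
            (\<exists>i\<in>{1..n}. v i \<noteq> 0) \<and>
            (\<forall>i\<in>{1..n}. (\<Sum>j=1..n. complex_of_real (A i j) * v j) = \<mu> * v i)
            \<longrightarrow> cmod \<mu> \<le> r))"

end

theory Submission
  imports Defs
begin

lemma sum14: "(\<Sum>j::nat=1..4. f j) = f 1 + f 2 + f 3 + (f 4::real)"
proof -
  have "{1..4::nat} = {1,2,3,4}" by auto
  thus ?thesis by simp
qed

theorem mainTheorem14:
  fixes x1 x2 x3 \<gamma> \<delta> :: real and w :: "nat \<Rightarrow> real"
  assumes "x1 > 0" "x2 > 0" "x3 > 0" "\<gamma> > 0" "\<delta> > 0" "\<gamma> \<noteq> 1" "\<delta> \<noteq> 1"
    and "principal_right_eigenvector (Qmat x1 x2 x3 \<gamma> \<delta>) 4 w"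
    and "\<delta> < 1" "\<gamma> < 1"
  shows "w 2 / w 3 > x2 / x1"
proof -
  note a = assms(8)[unfolded principal_right_eigenvector_def]
  have p1: "w 1 > 0" "w 2 > 0" "w 3 > 0" "w 4 > 0" using a by auto
  obtain r where hr: "\<forall>i\<in>{1..4}. (\<Sum>j=1..4. Qmat x1 x2 x3 \<gamma> \<delta> i j * w j) = r * w i"
    using a by blast
  have e1: "w 1 + \<delta> * x1 * w 2 + x2 * w 3 + x3 * w 4 = r * w 1"
    using hr[rule_format, of 1] by (simp only: sum14, simp add: Qmat_def)
  have e2: "w 1 / (\<delta> * x1) + w 2 + x2 / x1 * w 3 + x3 / x1 * w 4 = r * w 2"
    using hr[rule_format, of 2] by (simp only: sum14, simp add: Qmat_def)
  have e3: "w 1 / x2 + x1 / x2 * w 2 + w 3 + \<gamma> * x3 / x2 * w 4 = r * w 3"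
    using hr[rule_format, of 3] by (simp only: sum14, simp add: Qmat_def)
  have rpos: "r > 0"
  proof -
    have "r * w 1 > 0" using e1 p1 assms by (metis add_pos_pos mult_pos_pos)
    thus ?thesis using p1 by (simp add: zero_less_mult_iff)
  qed
  have e2': "w 1 / \<delta> + x1 * w 2 + x2 * w 3 + x3 * w 4 = r * (x1 * w 2)"
  proof -
    have "x1 * (w 1 / (\<delta> * x1) + w 2 + x2 / x1 * w 3 + x3 / x1 * w 4) = x1 * (r * w 2)"
      using e2 by simp
    moreover have "x1 * (w 1 / (\<delta> * x1) + w 2 + x2 / x1 * w 3 + x3 / x1 * w 4) = w 1 / \<delta> + x1 * w 2 + x2 * w 3 + x3 * w 4"
      using assms by (simp add: field_simps)
    ultimately show ?thesis by (metis mult.left_commute)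
  qed
  have e3': "w 1 + x1 * w 2 + x2 * w 3 + \<gamma> * x3 * w 4 = r * (x2 * w 3)"
  proof -
    have "x2 * (w 1 / x2 + x1 / x2 * w 2 + w 3 + \<gamma> * x3 / x2 * w 4) = x2 * (r * w 3)"
      using e3 by simp
    moreover have "x2 * (w 1 / x2 + x1 / x2 * w 2 + w 3 + \<gamma> * x3 / x2 * w 4) = w 1 + x1 * w 2 + x2 * w 3 + \<gamma> * x3 * w 4"
      using assms by (simp add: field_simps)
    ultimately show ?thesis by (metis mult.left_commute)
  qed
  have d: "r * (x1 * w 2 - x2 * w 3) = w 1 * (1 / \<delta> - 1) + x3 * w 4 * (1 - \<gamma>)"
    using e2' e3' by (simp add: algebra_simps)
  have "1 / \<delta> > 1" using assms by simp
  hence "w 1 * (1 / \<delta> - 1) > 0" using p1 by simp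
  moreover have "x3 * w 4 * (1 - \<gamma>) > 0" using p1 assms by simp
  ultimately have "r * (x1 * w 2 - x2 * w 3) > 0" using d by linarith
  hence "x1 * w 2 > x2 * w 3" using rpos by (simp add: zero_less_mult_iff)
  thus ?thesis using assms p1 by (simp add: field_simps)
qed

end
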